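(* Let $\alpha,\beta,\gamma,\kappa>0$ with $\mu:=\gamma-\alpha\beta>0$, and let $\lambda>0$. For $\eta\in\mathbb R$ define the polynomial $$p_\eta(z)=z^4+(\alpha+\kappa\lambda)z^3+(\beta\lambda+\alpha\kappa\lambda+\eta^2\lambda^2)z^2+(\gamma\lambda+\beta\kappa\lambda^2+\alpha\eta^2\lambda^2)z+\gamma\kappa\lambda^2.$$ Then for every $\eta\in\mathbb R$ with $|\eta|$ small enough, $p_\eta$ possesses a complex root $z_\eta$ with $\operatorname{Re} z_\eta>0$.
   Context: $p_\eta$ is the characteristic polynomial of the ODE system $\phi'''+\alpha\phi''+\beta\lambda\phi'+\gamma\lambda\phi-\eta\lambda\psi=0$, $\psi'+\kappa\lambda\psi+\eta\lambda\phi''+\alpha\eta\lambda\phi'=0$, obtained from single-mode solutions $u=\phi(t)w$, $\theta=\psi(t)w$ of the coupled MGT–Fourier system when $Aw=\lambda w$. *)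

theory Defs
  imports Complex_Main
begin

definition p_eta :: "real \<Rightarrow> real \<Rightarrow> real \<Rightarrow> real \<Rightarrow> real \<Rightarrow> real \<Rightarrow> complex \<Rightarrow> complex" where
  "p_eta \<alpha> \<beta> \<gamma> \<kappa> lam \<eta> z =
     z ^ 4
   + of_real (\<alpha> + \<kappa> * lam) * z ^ 3
   + of_real (\<beta> * lam + \<alpha> * \<kappa> * lam + \<eta>\<^sup>2 * lam\<^sup>2) * z ^ 2
   + of_real (\<gamma> * lam + \<beta> * \<kappa> * lam\<^sup>2 + \<alpha> * \<eta>\<^sup>2 * lam\<^sup>2) * z
   + of_real (\<gamma> * \<kappa> * lam\<^sup>2)"

end

theory Submission
  imports Defs "HOL-Computational_Algebra.Fundamental_Theorem_Algebra"
begin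


definition fq :: "real \<Rightarrow> real \<Rightarrow> real \<Rightarrow> real \<Rightarrow> complex \<Rightarrow> complex" where
  "fq a1 a2 a3 a4 z = z^4 + of_real a1 * z^3 + of_real a2 * z^2 + of_real a3 * z + of_real a4"

lemma quad_nonneg:
  fixes p q :: real
  assumes h: "\<forall>z::complex. z^2 + of_real p * z + of_real q = 0 \<longrightarrow> Re z \<le> 0"
  shows "p \<ge> 0 \<and> q \<ge> 0"
proof (cases "p^2 - 4*q \<ge> 0")
  case True
  define s where "s = sqrt (p^2 - 4*q)"
  have s2: "s^2 = p^2 - 4*q" using True by (simp add: s_def)
  have s0: "s \<ge> 0" using True by (simp add: s_def)
  define r1 where "r1 = (-p + s)/2"
  define r2 where "r2 = (-p - s)/2"
  have e1: "r1^2 + p*r1 + q = 0" unfolding r1_def using s2 by (simp add: power2_eq_square field_simps)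
  have e2: "r2^2 + p*r2 + q = 0" unfolding r2_def using s2 by (simp add: power2_eq_square field_simps)
  have c1: "(of_real r1::complex)^2 + of_real p * of_real r1 + of_real q = 0"
    by (metis (mono_tags, lifting) e1 of_real_0 of_real_add of_real_mult of_real_power)
  have c2: "(of_real r2::complex)^2 + of_real p * of_real r2 + of_real q = 0"
    by (metis (mono_tags, lifting) e2 of_real_0 of_real_add of_real_mult of_real_power)
  have "r1 \<le> 0" using h c1 by force
  moreover have "r2 \<le> 0" using h c2 by force
  moreover have "p = -(r1+r2)" by (simp add: r1_def r2_def field_simps)
  moreover have "q = r1*r2" unfolding r1_def r2_def using s2 by (simp add: power2_eq_square field_simps)
  ultimately show ?thesis by (simp add: mult_nonpos_nonpos)
next
  case False
  define s where "s = sqrt (4*q - p^2)"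
  have s2: "s^2 = 4*q - p^2" using False by (simp add: s_def)
  define z where "z = Complex (-p/2) (s/2)"
  have "z^2 + of_real p * z + of_real q = 0"
    unfolding z_def using s2 by (simp add: complex_eq_iff power2_eq_square field_simps)
  hence "Re z \<le> 0" using h by blast
  hence "p \<ge> 0" by (simp add: z_def)
  moreover have "q \<ge> 0" using False by (smt (verit) zero_le_power2)
  ultimately show ?thesis by simp
qed

lemma fq_root_exists: "\<exists>z. fq a1 a2 a3 a4 z = 0"
proof -
  have "\<exists>z. poly [:of_real a4, of_real a3, of_real a2, of_real a1, 1:] z = (0::complex)"
    by (rule fundamental_theorem_of_algebra) (simp add: constant_degree)
  then obtain z where "poly [:of_real a4, of_real a3, of_real a2, of_real a1, 1:] z = (0::complex)" by blast
  hence "fq a1 a2 a3 a4 z = 0" unfolding fq_def by (simp add: algebra_simps power_numeral_reduce)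
  thus ?thesis by blast
qed

lemma cubic_root_exists: "\<exists>z::complex. z^3 + of_real b1 * z^2 + of_real b2 * z + of_real b3 = 0"
proof -
  have "\<exists>z. poly [:of_real b3, of_real b2, of_real b1, 1:] z = (0::complex)"
    by (rule fundamental_theorem_of_algebra) (simp add: constant_degree)
  then obtain z where "poly [:of_real b3, of_real b2, of_real b1, 1:] z = (0::complex)" by blast
  hence "z^3 + of_real b1 * z^2 + of_real b2 * z + of_real b3 = 0" by (simp add: algebra_simps power_numeral_reduce)
  thus ?thesis by blast
qed

lemma fq_factor:
  fixes a1 a2 a3 a4 :: real
  shows
  "\<exists>p1 q1 p2 q2. a1 = p1 + p2 \<and> a2 = q1 + q2 + p1*p2 \<and> a3 = p1*q2 + p2*q1 \<and> a4 = q1*q2"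
proof (cases "\<exists>w. fq a1 a2 a3 a4 w = 0 \<and> Im w \<noteq> 0")
  case True
  then obtain w where w: "fq a1 a2 a3 a4 w = 0" "Im w \<noteq> 0" by blast
  define p1 where "p1 = -2 * Re w"
  define q1 where "q1 = Re w ^ 2 + Im w ^ 2"
  define p2 where "p2 = a1 - p1"
  define q2 where "q2 = a2 - q1 - p1*p2"
  define r1 where "r1 = a3 - p1*q2 - p2*q1"
  define r0 where "r0 = a4 - q1*q2"
  have Q1: "w^2 + of_real p1 * w + of_real q1 = 0"
    by (simp add: complex_eq_iff p1_def q1_def power2_eq_square algebra_simps)
  have id: "fq a1 a2 a3 a4 w = (w^2 + of_real p1 * w + of_real q1) * (w^2 + of_real p2 * w + of_real q2)
      + of_real r1 * w + of_real r0"
    unfolding fq_def r1_def r0_def q2_def p2_def by (simp add: algebra_simps power_numeral_reduce)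
  have "of_real r1 * w + of_real r0 = 0" using id Q1 w(1) by simp
  hence "r1 * Im w = 0" "r1 * Re w + r0 = 0" by (simp_all add: complex_eq_iff)
  hence "r1 = 0" "r0 = 0" using w(2) by auto
  thus ?thesis unfolding r1_def r0_def p2_def q2_def
    by (rule_tac x=p1 in exI, rule_tac x=q1 in exI, rule_tac x=p2 in exI, rule_tac x=q2 in exI) (simp add: p2_def q2_def)
next
  case False
  obtain w where w: "fq a1 a2 a3 a4 w = 0" using fq_root_exists by blast
  with False have "Im w = 0" by blast
  define x0 where "x0 = Re w"
  have wx: "w = of_real x0" using \<open>Im w = 0\<close> by (simp add: complex_eq_iff x0_def)
  define b1 where "b1 = a1 + x0"
  define b2 where "b2 = a2 + x0*b1"
  define b3 where "b3 = a3 + x0*b2"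
  have "of_real (x0^4 + a1*x0^3 + a2*x0^2 + a3*x0 + a4) = (0::complex)"
    using w unfolding wx fq_def by simp
  hence R0: "x0^4 + a1*x0^3 + a2*x0^2 + a3*x0 + a4 = 0" by (simp only: of_real_eq_0_iff)
  have R0': "a4 + x0*b3 = 0" using R0 by (simp add: b1_def b2_def b3_def algebra_simps power_numeral_reduce)
  obtain v :: complex where v: "v^3 + of_real b1 * v^2 + of_real b2 * v + of_real b3 = 0" using cubic_root_exists by blast
  have "fq a1 a2 a3 a4 v = (v - of_real x0) * (v^3 + of_real b1 * v^2 + of_real b2 * v + of_real b3)
       + of_real (a4 + x0*b3)"
    unfolding fq_def b1_def b2_def b3_def by (simp add: algebra_simps power_numeral_reduce)
  hence "fq a1 a2 a3 a4 v = 0" using v R0' by simp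
  with False have "Im v = 0" by blast
  define x1 where "x1 = Re v"
  have vx: "v = of_real x1" using \<open>Im v = 0\<close> by (simp add: complex_eq_iff x1_def)
  have "of_real (x1^3 + b1*x1^2 + b2*x1 + b3) = (0::complex)"
    using v unfolding vx by simp
  hence R1: "x1^3 + b1*x1^2 + b2*x1 + b3 = 0" by (simp only: of_real_eq_0_iff)
  define c1 where "c1 = b1 + x1"
  define c2 where "c2 = b2 + x1*c1"
  have R1': "b3 + x1*c2 = 0" using R1 by (simp add: c1_def c2_def algebra_simps power_numeral_reduce)
  show ?thesis
  proof (intro exI conjI)
    show "a1 = -(x0+x1) + c1" by (simp add: c1_def b1_def)
    show "a2 = x0*x1 + c2 + (-(x0+x1))*c1" by (simp add: c2_def c1_def b2_def b1_def algebra_simps)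
    show "a3 = (-(x0+x1))*c2 + c1*(x0*x1)" using R1' by (simp add: c2_def c1_def b3_def b2_def b1_def algebra_simps)
    have "a4 = -(x0*b3)" using R0' by linarith
    moreover have "b3 = -(x1*c2)" using R1' by linarith
    ultimately show "a4 = (x0*x1)*c2" by simp
  qed
qed

lemma hurwitz3:
  fixes a1 a2 a3 a4 :: real
  assumes h: "\<forall>z. fq a1 a2 a3 a4 z = 0 \<longrightarrow> Re z \<le> 0"
  shows "a1*a2*a3 - a3^2 - a1^2*a4 \<ge> 0"
proof -
  obtain p1 q1 p2 q2 where e: "a1 = p1 + p2" "a2 = q1 + q2 + p1*p2" "a3 = p1*q2 + p2*q1" "a4 = q1*q2"
    using fq_factor by blast
  have fac: "fq a1 a2 a3 a4 z = (z^2 + of_real p1 * z + of_real q1) * (z^2 + of_real p2 * z + of_real q2)" for z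
    unfolding fq_def e by (simp add: algebra_simps power_numeral_reduce)
  have "\<forall>z::complex. z^2 + of_real p1 * z + of_real q1 = 0 \<longrightarrow> Re z \<le> 0" using h fac by simp
  hence n1: "p1 \<ge> 0 \<and> q1 \<ge> 0" by (rule quad_nonneg)
  have "\<forall>z::complex. z^2 + of_real p2 * z + of_real q2 = 0 \<longrightarrow> Re z \<le> 0" using h fac by simp
  hence n2: "p2 \<ge> 0 \<and> q2 \<ge> 0" by (rule quad_nonneg)
  have "a1*a2*a3 - a3^2 - a1^2*a4 = p1*p2*((q1-q2)^2 + (p1+p2)*(p1*q2+p2*q1))"
    unfolding e by (simp add: algebra_simps power2_eq_square)
  also have "\<dots> \<ge> 0" using n1 n2 by (intro mult_nonneg_nonneg add_nonneg_nonneg) auto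
  finally show ?thesis .
qed

lemma main_fq:
  fixes \<alpha> \<beta> \<gamma> \<kappa> lam :: real
  assumes "\<alpha> > 0" and "\<beta> > 0" and "\<gamma> > 0" and "\<kappa> > 0"
    and "\<gamma> - \<alpha> * \<beta> > 0" and "lam > 0"
  shows "\<exists>\<delta>>0. \<forall>\<eta>::real. \<bar>\<eta>\<bar> < \<delta> \<longrightarrow>
           (\<exists>z::complex. fq (\<alpha> + \<kappa> * lam) (\<beta> * lam + \<alpha> * \<kappa> * lam + \<eta>\<^sup>2 * lam\<^sup>2)
            (\<gamma> * lam + \<beta> * \<kappa> * lam\<^sup>2 + \<alpha> * \<eta>\<^sup>2 * lam\<^sup>2) (\<gamma> * \<kappa> * lam\<^sup>2) z = 0 \<and> Re z > 0)"
proof -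
  define a1 where "a1 = \<alpha> + \<kappa> * lam"
  define a4 where "a4 = \<gamma> * \<kappa> * lam\<^sup>2"
  define D where "D = (\<lambda>\<eta>::real. a1 * (\<beta> * lam + \<alpha> * \<kappa> * lam + \<eta>\<^sup>2 * lam\<^sup>2) * (\<gamma> * lam + \<beta> * \<kappa> * lam\<^sup>2 + \<alpha> * \<eta>\<^sup>2 * lam\<^sup>2)
      - (\<gamma> * lam + \<beta> * \<kappa> * lam\<^sup>2 + \<alpha> * \<eta>\<^sup>2 * lam\<^sup>2)^2 - a1^2 * a4)"
  define k where "k = \<kappa> * lam"
  define b where "b = \<beta> * lam"
  define c where "c = \<gamma> * lam"
  have D0: "D 0 = -(c - \<alpha>*b) * (k^3 + \<alpha>*k^2 + b*k + c)"
    unfolding D_def a1_def a4_def k_def b_def c_def by (simp add: algebra_simps power2_eq_square power3_eq_cube)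
  have "c - \<alpha>*b > 0" using assms by (simp add: c_def b_def)
  moreover have "k^3 + \<alpha>*k^2 + b*k + c > 0" using assms by (simp add: k_def b_def c_def add_pos_pos)
  ultimately have "D 0 < 0" unfolding D0 by (simp add: mult_neg_pos)
  have "isCont D 0" unfolding D_def by (intro continuous_intros)
  hence "(D \<longlongrightarrow> D 0) (at 0)" by (simp add: isCont_def)
  hence "eventually (\<lambda>\<eta>. D \<eta> < 0) (at 0)" using \<open>D 0 < 0\<close> by (rule order_tendstoD(2))
  then obtain d where d: "d > 0" "\<forall>\<eta>. \<eta> \<noteq> 0 \<and> dist \<eta> 0 < d \<longrightarrow> D \<eta> < 0"
    unfolding eventually_at by auto
  have Dneg: "D \<eta> < 0" if "\<bar>\<eta>\<bar> < d" for \<eta>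
    using d \<open>D 0 < 0\<close> that by (cases "\<eta> = 0") auto
  show ?thesis
  proof (rule exI[of _ d], intro conjI allI impI)
    show "d > 0" by fact
    fix \<eta> :: real assume "\<bar>\<eta>\<bar> < d"
    show "\<exists>z::complex. fq (\<alpha> + \<kappa> * lam) (\<beta> * lam + \<alpha> * \<kappa> * lam + \<eta>\<^sup>2 * lam\<^sup>2)
            (\<gamma> * lam + \<beta> * \<kappa> * lam\<^sup>2 + \<alpha> * \<eta>\<^sup>2 * lam\<^sup>2) (\<gamma> * \<kappa> * lam\<^sup>2) z = 0 \<and> Re z > 0"
    proof (rule ccontr)
      assume "\<not> ?thesis"
      hence "\<forall>z. fq a1 (\<beta> * lam + \<alpha> * \<kappa> * lam + \<eta>\<^sup>2 * lam\<^sup>2)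
            (\<gamma> * lam + \<beta> * \<kappa> * lam\<^sup>2 + \<alpha> * \<eta>\<^sup>2 * lam\<^sup>2) a4 z = 0 \<longrightarrow> Re z \<le> 0"
        unfolding a1_def a4_def by (auto simp: not_less)
      hence "D \<eta> \<ge> 0" unfolding D_def by (rule hurwitz3)
      with Dneg[OF \<open>\<bar>\<eta>\<bar> < d\<close>] show False by simp
    qed
  qed
qed


theorem proposition5p1:
  fixes \<alpha> \<beta> \<gamma> \<kappa> lam :: real
  assumes "\<alpha> > 0" and "\<beta> > 0" and "\<gamma> > 0" and "\<kappa> > 0"
    and "\<gamma> - \<alpha> * \<beta> > 0" and "lam > 0"
  shows "\<exists>\<delta>>0. \<forall>\<eta>::real. \<bar>\<eta>\<bar> < \<delta> \<longrightarrow>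
           (\<exists>z::complex. p_eta \<alpha> \<beta> \<gamma> \<kappa> lam \<eta> z = 0 \<and> Re z > 0)"
  using main_fq[OF assms] unfolding p_eta_def fq_def .

end
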